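(* Let $(J,\preccurlyeq)$ be a finite upper semilattice and $F\subseteq K_J$ a subfunctor of the constant functor. Let $A:=\mathrm{supp}(\beta^0F)$ (the set of minimal elements of $\{a\in J\mid F(a)\neq0\}$) and fix a total order $<$ on $A$. Define the global Koszul complex $\mathcal K F$ by \[ (\mathcal K F)_d:=\bigoplus_{S\subseteq A,\ |S|=d+1} K\big(\textstyle\bigvee S,-\big)\qquad (d\geq 0), \] with differential $\partial=\sum_{i=0}^{d+1}(-1)^i\partial_i\colon(\mathcal K F)_{d+1}\to(\mathcal K F)_d$, where $\partial_i$ maps the summand $K(\bigvee S,-)$ indexed by $S=\{s_0<\cdots<s_{d+1}\}$ to the summand $K(\bigvee(S\setminus\{s_i\}),-)$ via the inclusion $K(\bigvee S,-)\subseteq K(\bigvee(S\setminus\{s_i\}),-)$, and with augmentation $\partial\colon(\mathcal K F)_0=\bigoplus_{s\in A}K(s,-)\to F$ given on the summand $K(s,-)$ by the inclusion $K(s,-)\subseteq F$. Then $\cdots\to(\mathcal KF)_1\to(\mathcal KF)_0\to F\to 0$ is a free resolution of $F$ (i.e.\ it is exact, and each $(\mathcal KF)_d$ is a direct sum of functors $K(b,-)$).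
   Context: $K$ is a field and $\mathrm{vect}_K$ the category of finite-dimensional $K$-vector spaces. $K_J\colon J\to\mathrm{vect}_K$ is the constant functor with value $K$ and identity transition maps. For $a\in J$, $K(a,-)\subseteq K_J$ is the subfunctor with $K(a,b)=K$ if $a\preccurlyeq b$ and $0$ otherwise. Subfunctors of $K_J$ correspond to upsets (their supports $\{a\mid F(a)\neq 0\}$), and $\mathrm{supp}(\beta^0F)$, the support of the $0$-th Betti diagram (degrees of generators of a minimal projective cover), equals the set of minimal elements of the support of $F$. An upper semilattice is a poset in which every nonempty subset $S$ has a join $\bigvee S$. *)

theory Defs
  imports Main
begin

text \<open>The poset J is modelled as a finite type of class semilattice_sup; the join of a
nonempty (finite) subset S is Sup_fin S.  A subfunctor F of the constant functor K_J is
given pointwise by subspaces F a of K (viewed as a K-vector space), such that the identity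
transition maps restrict, i.e. F a is contained in F b whenever a is below b.\<close>

definition is_subfunctor_const :: "('j::order \<Rightarrow> 'k::field set) \<Rightarrow> bool" where
  "is_subfunctor_const F \<longleftrightarrow>
     (\<forall>a. 0 \<in> F a \<and> (\<forall>x\<in>F a. \<forall>y\<in>F a. x + y \<in> F a) \<and> (\<forall>c x. x \<in> F a \<longrightarrow> c * x \<in> F a))
     \<and> (\<forall>a b. a \<le> b \<longrightarrow> F a \<subseteq> F b)"

definition supp_fun :: "('j \<Rightarrow> 'k::zero set) \<Rightarrow> 'j set" where
  "supp_fun F = {a. F a \<noteq> {0}}"

definition betti0_supp :: "('j::order \<Rightarrow> 'k::zero set) \<Rightarrow> 'j set" where
  "betti0_supp F = {a \<in> supp_fun F. \<forall>a'\<in>supp_fun F. a' \<le> a \<longrightarrow> a' = a}"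

text \<open>Value at b of the d-th term of the Koszul complex: the direct sum over
S \<subseteq> A with |S| = d+1 of K(\<Squnion>S, b), which is K if \<Squnion>S \<le> b and 0 otherwise.
Elements are represented as coefficient families indexed by the subsets S, vanishing off the
index set of summands that are nonzero at b.\<close>

definition koszul_idx :: "'j::semilattice_sup set \<Rightarrow> nat \<Rightarrow> 'j \<Rightarrow> 'j set set" where
  "koszul_idx A d b = {S. S \<subseteq> A \<and> card S = Suc d \<and> Sup_fin S \<le> b}"

definition koszul_space :: "'j::semilattice_sup set \<Rightarrow> nat \<Rightarrow> 'j \<Rightarrow> ('j set \<Rightarrow> 'k::field) set" where
  "koszul_space A d b = {x. \<forall>S. x S \<noteq> 0 \<longrightarrow> S \<in> koszul_idx A d b}"

text \<open>Sign (-1)^i where s = s_i is the i-th element of S (counting from 0) in the order r.\<close>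

definition koszul_sign :: "('j \<times> 'j) set \<Rightarrow> 'j set \<Rightarrow> 'j \<Rightarrow> 'k::field" where
  "koszul_sign r S s = (-1) ^ card {t \<in> S. (t, s) \<in> r}"

text \<open>Differential (KF)_{d+1} \<rightarrow> (KF)_d at b: the summand indexed by S goes to the summands
indexed by S - {s_i} with sign (-1)^i; component maps are the inclusions (identity on K).\<close>

definition koszul_diff ::
  "'j::semilattice_sup set \<Rightarrow> ('j \<times> 'j) set \<Rightarrow> nat \<Rightarrow> 'j \<Rightarrow> ('j set \<Rightarrow> 'k::field) \<Rightarrow> ('j set \<Rightarrow> 'k)" where
  "koszul_diff A r d b x =
     (\<lambda>T. if T \<in> koszul_idx A d b
          then (\<Sum>s\<in>A - T. koszul_sign r (insert s T) s * x (insert s T))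
          else 0)"

text \<open>Augmentation (KF)_0 \<rightarrow> F at b: inclusion K(s,-) \<subseteq> F on each summand.\<close>

definition koszul_aug :: "'j set \<Rightarrow> ('j set \<Rightarrow> 'k::field) \<Rightarrow> 'k" where
  "koszul_aug A x = (\<Sum>s\<in>A. x {s})"

end

theory Submission imports Defs begin

definition Dsum :: "'j set \<Rightarrow> ('j \<times> 'j) set \<Rightarrow> 'j set \<Rightarrow> ('j set \<Rightarrow> 'k::field) \<Rightarrow> 'k" where
  "Dsum A r T x = (\<Sum>s\<in>A - T. koszul_sign r (insert s T) s * x (insert s T))"

lemma sg_insert:
  assumes "finite S" "s \<notin> S"
  shows "(koszul_sign r (insert s S) t :: 'k::field) = (if (s,t)\<in>r then -1 else 1) * koszul_sign r S t"
proof (cases "(s,t)\<in>r")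
  case True
  then have "{u \<in> insert s S. (u, t) \<in> r} = insert s {u \<in> S. (u, t) \<in> r}" by auto
  moreover have "card (insert s {u \<in> S. (u, t) \<in> r}) = Suc (card {u \<in> S. (u, t) \<in> r})"
    using assms by (simp add: card_insert_disjoint)
  ultimately show ?thesis using True by (simp add: koszul_sign_def)
next
  case False
  then have "{u \<in> insert s S. (u, t) \<in> r} = {u \<in> S. (u, t) \<in> r}" by auto
  then show ?thesis using False by (simp add: koszul_sign_def)
qed

lemma sg_sq: "(koszul_sign r S t :: 'k::field) * koszul_sign r S t = 1"
  by (simp add: koszul_sign_def power_mult_distrib[symmetric])

lemma sg_self:
  assumes "finite S" "s \<notin> S" "irrefl r"
  shows "(koszul_sign r (insert s S) s :: 'k::field) = koszul_sign r S s"
  using sg_insert[OF assms(1,2), of r s] assms(3) by (simp add: irrefl_def)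

lemma dd0:
  assumes "finite A" "strict_linear_order_on A r" "U \<subseteq> A"
  shows "(\<Sum>s\<in>A-U. (koszul_sign r (insert s U) s :: 'k::field) * Dsum A r (insert s U) x) = 0"
proof -
  have tr: "trans r" and irr: "irrefl r" and tot: "total_on A r"
    using assms(2) by (auto simp: strict_linear_order_on_def)
  have finU: "finite U" using assms(1,3) finite_subset by blast
  define B where "B = A - U"
  define g where "g s t = koszul_sign r U s * koszul_sign r U t * x (insert t (insert s U))" for s t
  define h where "h p = (if p \<in> r then -1 else 1) * g (fst p) (snd p)" for p
  define k where "k p = (if p \<in> r then - g (fst p) (snd p) else 0)" for p
  define P where "P = Sigma B (\<lambda>s. B - {s})"
  have gsym: "g s t = g t s" for s t by (simp add: g_def insert_commute mult.commute)
  have "(\<Sum>s\<in>A-U. (koszul_sign r (insert s U) s :: 'k::field) * Dsum A r (insert s U) x)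
      = (\<Sum>s\<in>B. \<Sum>t\<in>B - {s}. h (s,t))"
  proof (rule sum.cong)
    fix s assume s0: "s \<in> B"
    then have s: "s \<in> A - U" by (simp add: B_def)
    have "koszul_sign r (insert s U) s * Dsum A r (insert s U) x
       = (\<Sum>t\<in>B - {s}. koszul_sign r (insert s U) s * (koszul_sign r (insert t (insert s U)) t * x (insert t (insert s U))))"
      unfolding Dsum_def B_def by (simp add: sum_distrib_left Diff_insert[symmetric])
    also have "\<dots> = (\<Sum>t\<in>B - {s}. h (s,t))"
    proof (rule sum.cong)
      fix t assume t: "t \<in> B - {s}"
      have "koszul_sign r (insert t (insert s U)) t = (koszul_sign r (insert s U) t :: 'k)"
        using t finU irr by (intro sg_self) (auto simp: B_def)
      also have "\<dots> = (if (s,t)\<in>r then -1 else 1) * koszul_sign r U t"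
        using s finU by (intro sg_insert) auto
      finally have 1: "(koszul_sign r (insert t (insert s U)) t :: 'k) = (if (s,t)\<in>r then -1 else 1) * koszul_sign r U t" .
      have 2: "(koszul_sign r (insert s U) s :: 'k) = koszul_sign r U s"
        using s finU irr by (intro sg_self) auto
      show "koszul_sign r (insert s U) s * (koszul_sign r (insert t (insert s U)) t * x (insert t (insert s U))) = h (s, t)"
        unfolding 1 2 h_def g_def by (simp add: algebra_simps)
    qed simp
    finally show "koszul_sign r (insert s U) s * Dsum A r (insert s U) x = (\<Sum>t\<in>B - {s}. h (s,t))" .
  qed (simp add: B_def)
  also have "\<dots> = (\<Sum>p\<in>P. h p)"
    unfolding P_def using sum.Sigma[of B "\<lambda>s. B - {s}" "\<lambda>s t. h (s,t)"] assms(1)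
    by (simp add: B_def case_prod_unfold)
  also have "\<dots> = (\<Sum>p\<in>P. k p - k (prod.swap p))"
  proof (rule sum.cong)
    fix p assume p: "p \<in> P"
    obtain s t where st: "p = (s,t)" by (cases p)
    have sA: "s \<in> A" "t \<in> A" "s \<noteq> t" using p st by (auto simp: P_def B_def)
    have "(s,t) \<in> r \<or> (t,s) \<in> r" using tot sA by (auto simp: total_on_def)
    moreover have "\<not> ((s,t) \<in> r \<and> (t,s) \<in> r)" using tr irr
      by (meson irrefl_def transD)
    ultimately show "h p = k p - k (prod.swap p)"
      unfolding st h_def k_def using gsym[of s t] by auto
  qed simp
  also have "\<dots> = (\<Sum>p\<in>P. k p) - (\<Sum>p\<in>P. k (prod.swap p))"
    by (simp add: sum_subtractf)
  also have "(\<Sum>p\<in>P. k (prod.swap p)) = (\<Sum>p\<in>P. k p)"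
  proof -
    have "prod.swap ` P = P" by (auto simp: P_def image_iff)
    moreover have "inj_on prod.swap P" by simp
    ultimately show ?thesis using sum.reindex[of prod.swap P k] by simp
  qed
  finally show ?thesis by simp
qed

definition Hom :: "('j \<times> 'j) set \<Rightarrow> 'j \<Rightarrow> ('j set \<Rightarrow> 'k::field) \<Rightarrow> ('j set \<Rightarrow> 'k)" where
  "Hom r v x = (\<lambda>S. if v \<in> S then koszul_sign r S v * x (S - {v}) else 0)"

lemma homot:
  fixes x :: "'j set \<Rightarrow> 'k::field"
  assumes "finite A" "strict_linear_order_on A r" "v \<in> A" "T \<subseteq> A"
  shows "Dsum A r T (Hom r v x) = x T - (if v \<in> T then koszul_sign r T v * Dsum A r (T - {v}) x else 0)"
proof -
  have tr: "trans r" and irr: "irrefl r" and tot: "total_on A r"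
    using assms(2) by (auto simp: strict_linear_order_on_def)
  have finT: "finite T" using assms(1,4) finite_subset by blast
  show ?thesis
  proof (cases "v \<in> T")
    case False
    have "Dsum A r T (Hom r v x) = (\<Sum>s\<in>A - T. if s = v then x T else 0)"
      unfolding Dsum_def
    proof (rule sum.cong)
      fix s assume s: "s \<in> A - T"
      show "koszul_sign r (insert s T) s * Hom r v x (insert s T) = (if s = v then x T else 0)"
      proof (cases "s = v")
        case True
        then show ?thesis using False sg_sq[of r "insert v T" v, where 'k='k]
          by (simp add: Hom_def mult.assoc[symmetric])
      next
        case False2: False
        then show ?thesis using False by (simp add: Hom_def)
      qed
    qed simp
    also have "\<dots> = x T" using False assms(1,3) sum.delta[of "A - T" v "\<lambda>_. x T"] by simp
    finally show ?thesis using False by simp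
  next
    case True
    define T' where "T' = T - {v}"
    have T: "T = insert v T'" "v \<notin> T'" using True by (auto simp: T'_def)
    have finT': "finite T'" using finT by (simp add: T'_def)
    have AT: "A - T' = insert v (A - T)" using True assms(3) by (auto simp: T'_def)
    have D': "Dsum A r T' x = koszul_sign r T v * x T + (\<Sum>s\<in>A - T. koszul_sign r (insert s T') s * x (insert s T'))"
      unfolding Dsum_def AT using assms(1) T by (simp add: sum.insert)
    have "Dsum A r T (Hom r v x) = (\<Sum>s\<in>A - T. - koszul_sign r T v * (koszul_sign r (insert s T') s * x (insert s T')))"
      unfolding Dsum_def
    proof (rule sum.cong)
      fix s assume s: "s \<in> A - T"
      have sv: "s \<noteq> v" "s \<notin> T'" "s \<in> A" using s T by auto
      have e1: "insert s T - {v} = insert s T'" using T sv by auto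
      have "(koszul_sign r (insert s T) s :: 'k) = koszul_sign r (insert v (insert s T')) s"
        using T by (simp add: insert_commute)
      also have "\<dots> = (if (v,s)\<in>r then -1 else 1) * koszul_sign r (insert s T') s"
        using T sv finT' by (intro sg_insert) auto
      finally have e2: "(koszul_sign r (insert s T) s :: 'k) = (if (v,s)\<in>r then -1 else 1) * koszul_sign r (insert s T') s" .
      have e3: "(koszul_sign r (insert s T) v :: 'k) = (if (s,v)\<in>r then -1 else 1) * koszul_sign r T v"
        using sv s finT by (intro sg_insert) auto
      have "(v,s) \<in> r \<or> (s,v) \<in> r" using tot sv assms(3) by (auto simp: total_on_def)
      moreover have "\<not> ((s,v) \<in> r \<and> (v,s) \<in> r)" using tr irr
        by (meson irrefl_def transD)
      ultimately show "koszul_sign r (insert s T) s * Hom r v x (insert s T) =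
         - koszul_sign r T v * (koszul_sign r (insert s T') s * x (insert s T'))"
        unfolding Hom_def e1 e2 e3 using True by auto
    qed simp
    also have "\<dots> = - koszul_sign r T v * (Dsum A r T' x - koszul_sign r T v * x T)"
      unfolding D' by (simp add: sum_distrib_left)
    also have "\<dots> = x T - koszul_sign r T v * Dsum A r T' x"
      using sg_sq[of r T v, where 'k='k] by (simp add: algebra_simps)
    finally show ?thesis using True by (simp add: T'_def)
  qed
qed

lemma idx_iff:
  "S \<in> koszul_idx A d b \<longleftrightarrow> S \<subseteq> A \<and> card S = Suc d \<and> (\<forall>s\<in>S. s \<le> (b::'j::{finite,semilattice_sup}))"
proof -
  have "card S = Suc d \<Longrightarrow> S \<noteq> {}" by auto
  then show ?thesis unfolding koszul_idx_def
    by (auto simp: Sup_fin.bounded_iff)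
qed

lemma diff_space: "koszul_diff A r d b y \<in> koszul_space A d b"
  by (simp add: koszul_space_def koszul_diff_def)

lemma diff_eq:
  fixes y :: "'j::{finite,semilattice_sup} set \<Rightarrow> 'k::field"
  assumes "y \<in> koszul_space A (Suc d) b" "S \<subseteq> A" "card S = Suc d"
  shows "koszul_diff A r d b y S = Dsum A r S y"
proof (cases "S \<in> koszul_idx A d b")
  case True then show ?thesis by (simp add: koszul_diff_def Dsum_def)
next
  case False
  then obtain s where s: "s \<in> S" "\<not> s \<le> b" using assms by (auto simp: idx_iff)
  have "y (insert t S) = 0" if "t \<in> A - S" for t
  proof -
    have "insert t S \<notin> koszul_idx A (Suc d) b" using s by (auto simp: idx_iff)
    then show ?thesis using assms(1) by (auto simp: koszul_space_def)
  qed
  then have "Dsum A r S y = 0" by (simp add: Dsum_def)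
  then show ?thesis using False by (simp add: koszul_diff_def)
qed

lemma Hom_space:
  fixes x :: "'j::{finite,semilattice_sup} set \<Rightarrow> 'k::field"
  assumes "x \<in> koszul_space A d b" "v \<in> A" "v \<le> b"
  shows "Hom r v x \<in> koszul_space A (Suc d) b"
  unfolding koszul_space_def
proof (intro CollectI allI impI)
  fix S assume "Hom r v x S \<noteq> 0"
  then have v: "v \<in> S" and "x (S - {v}) \<noteq> 0" by (auto simp: Hom_def split: if_splits)
  then have "S - {v} \<in> koszul_idx A d b" using assms(1) by (auto simp: koszul_space_def)
  then have 1: "S - {v} \<subseteq> A" and 2: "card (S - {v}) = Suc d" and 3: "\<forall>s\<in>S - {v}. s \<le> b"
    unfolding idx_iff by blast+
  have "card S = Suc (card (S - {v}))" using v card_Suc_Diff1[OF finite_class.finite[of S] v] by linarith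
  moreover have "S \<subseteq> A" using 1 v assms(2) by blast
  moreover have "\<forall>s\<in>S. s \<le> b" using 3 assms(3) by blast
  ultimately show "S \<in> koszul_idx A (Suc d) b" unfolding idx_iff using 2 by simp
qed

lemma cycle_of_boundary:
  fixes y :: "'j::{finite,semilattice_sup} set \<Rightarrow> 'k::field"
  assumes "strict_linear_order_on A r" "y \<in> koszul_space A (Suc d) b" "U \<subseteq> A" "card U = d"
  shows "Dsum A r U (koszul_diff A r d b y) = 0"
proof -
  have irr: "irrefl r" using assms(1) by (simp add: strict_linear_order_on_def)
  have "Dsum A r U (koszul_diff A r d b y) = (\<Sum>s\<in>A-U. koszul_sign r (insert s U) s * Dsum A r (insert s U) y)"
    unfolding Dsum_def
  proof (rule sum.cong)
    fix s assume s: "s \<in> A - U"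
    have "card (insert s U) = Suc d" using s assms(4) by (simp add: card_insert_if)
    then show "koszul_sign r (insert s U) s * koszul_diff A r d b y (insert s U) =
          koszul_sign r (insert s U) s * (\<Sum>t\<in>A - insert s U. koszul_sign r (insert t (insert s U)) t * y (insert t (insert s U)))"
      using diff_eq[OF assms(2), of "insert s U" r] s assms(3) by (simp add: Dsum_def)
  qed simp
  also have "\<dots> = 0" by (rule dd0) (use assms in auto)
  finally show ?thesis .
qed

lemma boundary_of_cycle:
  fixes x :: "'j::{finite,semilattice_sup} set \<Rightarrow> 'k::field"
  assumes "strict_linear_order_on A r" "x \<in> koszul_space A d b" "v \<in> A" "v \<le> b"
    and cyc: "\<And>U. U \<subseteq> A \<Longrightarrow> card U = d \<Longrightarrow> Dsum A r U x = 0"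
  shows "koszul_diff A r d b (Hom r v x) = x"
proof
  fix T
  show "koszul_diff A r d b (Hom r v x) T = x T"
  proof (cases "T \<in> koszul_idx A d b")
    case True
    then have TA: "T \<subseteq> A" "card T = Suc d" by (auto simp: idx_iff)
    have "Dsum A r T (Hom r v x) = x T - (if v \<in> T then koszul_sign r T v * Dsum A r (T - {v}) x else 0)"
      by (rule homot) (use assms TA in auto)
    also have "\<dots> = x T"
    proof (cases "v \<in> T")
      case True
      have "card (T - {v}) = d" using True TA by simp
      then show ?thesis using True cyc[of "T - {v}"] TA by auto
    qed simp
    finally show ?thesis using True by (simp add: koszul_diff_def Dsum_def)
  next
    case False
    then show ?thesis using assms(2) by (auto simp: koszul_diff_def koszul_space_def)
  qed
qed

lemma aug_Dsum:
  fixes x :: "'j set \<Rightarrow> 'k::field"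
  assumes "irrefl r"
  shows "koszul_aug A x = Dsum A r {} x"
proof -
  have "(koszul_sign r {s} s :: 'k) = 1" for s
  proof -
    have "{t \<in> {s}. (t, s) \<in> r} = {}" using assms by (auto simp: irrefl_def)
    then show ?thesis unfolding koszul_sign_def by (metis card.empty power_0)
  qed
  then show ?thesis by (simp add: koszul_aug_def Dsum_def)
qed

lemma zero_space: "(\<lambda>_. 0) \<in> koszul_space A d b"
  by (simp add: koszul_space_def)

lemma diff_zero: "koszul_diff A r d b (\<lambda>_. 0 :: 'k::field) = (\<lambda>_. 0)"
  by (simp add: koszul_diff_def fun_eq_iff)

lemma empty_space:
  fixes x :: "'j::{finite,semilattice_sup} set \<Rightarrow> 'k::field"
  assumes "\<not> (\<exists>v\<in>A. v \<le> b)" "x \<in> koszul_space A d b"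
  shows "x = (\<lambda>_. 0)"
proof
  fix S show "x S = 0"
  proof (rule ccontr)
    assume "x S \<noteq> 0"
    then have "S \<in> koszul_idx A d b" using assms(2) by (auto simp: koszul_space_def)
    then have "S \<subseteq> A" "card S = Suc d" "\<forall>s\<in>S. s \<le> b" unfolding idx_iff by blast+
    then obtain s where "s \<in> S" by fastforce
    then show False using assms(1) \<open>S \<subseteq> A\<close> \<open>\<forall>s\<in>S. s \<le> b\<close> by blast
  qed
qed

theorem proposition4p8:
  fixes F :: "'j::{finite, semilattice_sup} \<Rightarrow> 'k::field set"
    and r :: "('j \<times> 'j) set"
  assumes "is_subfunctor_const F"
    and "strict_linear_order_on (betti0_supp F) r"
  shows "\<forall>b.
     koszul_aug (betti0_supp F) ` (koszul_space (betti0_supp F) 0 b :: ('j set \<Rightarrow> 'k) set) = F b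
   \<and> {x \<in> (koszul_space (betti0_supp F) 0 b :: ('j set \<Rightarrow> 'k) set). koszul_aug (betti0_supp F) x = 0}
       = koszul_diff (betti0_supp F) r 0 b ` koszul_space (betti0_supp F) 1 b
   \<and> (\<forall>d. {x \<in> (koszul_space (betti0_supp F) (Suc d) b :: ('j set \<Rightarrow> 'k) set). koszul_diff (betti0_supp F) r d b x = (\<lambda>_. 0)}
       = koszul_diff (betti0_supp F) r (Suc d) b ` koszul_space (betti0_supp F) (Suc (Suc d)) b)"
proof (intro allI conjI)
  fix b :: 'j
  define A where "A = betti0_supp F"
  have slo: "strict_linear_order_on A r" using assms(2) by (simp add: A_def)
  have irr: "irrefl r" using slo by (simp add: strict_linear_order_on_def)
  have finA: "finite A" by simp
  have sub: "\<forall>a. 0 \<in> F a \<and> (\<forall>c x. x \<in> F a \<longrightarrow> c * x \<in> F a)" "\<forall>a b. a \<le> b \<longrightarrow> F a \<subseteq> F b"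
    using assms(1) by (auto simp: is_subfunctor_const_def)
  have Fval: "F a = UNIV" if "F a \<noteq> {0}" for a
  proof -
    have "\<exists>x\<in>F a. x \<noteq> 0"
    proof (rule ccontr)
      assume "\<not> (\<exists>x\<in>F a. x \<noteq> 0)"
      then have "F a \<subseteq> {0}" by auto
      moreover have "0 \<in> F a" using sub(1) by simp
      ultimately have "F a = {0}" by auto
      then show False using that by simp
    qed
    then obtain x where x: "x \<in> F a" "x \<noteq> 0" by blast
    have "y \<in> F a" for y
    proof -
      have "(y / x) * x \<in> F a" using sub(1) x by blast
      then show ?thesis using x by simp
    qed
    then show ?thesis by auto
  qed
  have below: "\<exists>v\<in>A. v \<le> b" if "F b \<noteq> {0}"
  proof -
    define M where "M = {a. F a \<noteq> {0} \<and> a \<le> b}"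
    have "finite M" by simp
    moreover have "b \<in> M" using that by (simp add: M_def)
    ultimately have "finite M" "M \<noteq> {}" by blast+
    from finite_has_minimal[OF this] obtain m where m: "m \<in> M" "\<forall>a\<in>M. a \<le> m \<longrightarrow> m = a" by blast
    have "m \<in> A" unfolding A_def betti0_supp_def supp_fun_def
    proof (intro CollectI conjI ballI impI)
      show "F m \<noteq> {0}" using m by (simp add: M_def)
      fix a' assume "a' \<in> {a. F a \<noteq> {0}}" "a' \<le> m"
      then have "a' \<in> M" using m(1) by (auto simp: M_def)
      then show "a' = m" using m(2) \<open>a' \<le> m\<close> by auto
    qed
    then show ?thesis using m by (auto simp: M_def)
  qed
  have above: "F b = UNIV" if "v \<in> A" "v \<le> b" for v
  proof -
    have "F v \<noteq> {0}" using that by (simp add: A_def betti0_supp_def supp_fun_def)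
    moreover have "F v \<subseteq> F b" using sub(2) that by blast
    ultimately have "F b \<noteq> {0}"
    proof -
      assume "F v \<noteq> {0}" "F v \<subseteq> F b"
      show "F b \<noteq> {0}"
      proof
        assume "F b = {0}"
        then have "F v \<subseteq> {0}" using \<open>F v \<subseteq> F b\<close> by simp
        moreover have "0 \<in> F v" using sub(1) by simp
        ultimately have "F v = {0}" by auto
        then show False using \<open>F v \<noteq> {0}\<close> by simp
      qed
    qed
    then show ?thesis by (rule Fval)
  qed
  show "koszul_aug (betti0_supp F) ` (koszul_space (betti0_supp F) 0 b :: ('j set \<Rightarrow> 'k) set) = F b"
    unfolding A_def[symmetric]
  proof (cases "\<exists>v\<in>A. v \<le> b")
    case True
    then obtain v where v: "v \<in> A" "v \<le> b" by blast
    have "c \<in> koszul_aug A ` (koszul_space A 0 b :: ('j set \<Rightarrow> 'k) set)" for c :: 'k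
    proof
      define x :: "'j set \<Rightarrow> 'k" where "x = (\<lambda>S. if S = {v} then c else 0)"
      show "x \<in> koszul_space A 0 b" using v by (auto simp: x_def koszul_space_def idx_iff)
      have "koszul_aug A x = (\<Sum>s\<in>A. if s = v then c else 0)"
        unfolding koszul_aug_def x_def by (intro sum.cong) auto
      then show "c = koszul_aug A x" using v finA by simp
    qed
    then show "koszul_aug A ` (koszul_space A 0 b :: ('j set \<Rightarrow> 'k) set) = F b" using above[OF v] by auto
  next
    case False
    then have "F b = {0}" using below by blast
    moreover have "koszul_aug A ` (koszul_space A 0 b :: ('j set \<Rightarrow> 'k) set) = {0}"
    proof -
      have "koszul_space A 0 b = {(\<lambda>_. 0 :: 'k)}" using empty_space[OF False] zero_space by blast
      then show ?thesis by (simp add: koszul_aug_def)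
    qed
    ultimately show "koszul_aug A ` (koszul_space A 0 b :: ('j set \<Rightarrow> 'k) set) = F b" by simp
  qed
  show "{x \<in> (koszul_space (betti0_supp F) 0 b :: ('j set \<Rightarrow> 'k) set). koszul_aug (betti0_supp F) x = 0}
       = koszul_diff (betti0_supp F) r 0 b ` koszul_space (betti0_supp F) 1 b"
    unfolding A_def[symmetric]
  proof (intro equalityI subsetI)
    fix x :: "'j set \<Rightarrow> 'k" assume "x \<in> {x \<in> koszul_space A 0 b. koszul_aug A x = 0}"
    then have x: "x \<in> koszul_space A 0 b" "koszul_aug A x = 0" by auto
    show "x \<in> koszul_diff A r 0 b ` koszul_space A 1 b"
    proof (cases "\<exists>v\<in>A. v \<le> b")
      case True
      then obtain v where v: "v \<in> A" "v \<le> b" by blast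
      have "koszul_diff A r 0 b (Hom r v x) = x"
      proof (rule boundary_of_cycle[OF slo x(1) v])
        fix U :: "'j set" assume "U \<subseteq> A" "card U = 0"
        then have "U = {}" by simp
        then show "Dsum A r U x = 0" using x(2) aug_Dsum[OF irr, of A x] by simp
      qed
      moreover have "Hom r v x \<in> koszul_space A 1 b" using Hom_space[OF x(1) v] by simp
      ultimately show ?thesis by (intro image_eqI[where x="Hom r v x"]) simp_all
    next
      case False
      then have "x = (\<lambda>_. 0)" using empty_space[OF False x(1)] by simp
      then show ?thesis by (intro image_eqI[where x="\<lambda>_. 0"]) (simp_all add: diff_zero zero_space)
    qed
  next
    fix x :: "'j set \<Rightarrow> 'k" assume "x \<in> koszul_diff A r 0 b ` koszul_space A 1 b"
    then obtain y where y: "y \<in> koszul_space A (Suc 0) b" "x = koszul_diff A r 0 b y" by auto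
    have "koszul_aug A x = Dsum A r {} x" by (rule aug_Dsum[OF irr])
    also have "\<dots> = 0" unfolding y(2) by (rule cycle_of_boundary[OF slo y(1)]) auto
    moreover have "x \<in> koszul_space A 0 b" using y(2) diff_space by simp
    ultimately show "x \<in> {x \<in> koszul_space A 0 b. koszul_aug A x = 0}" by simp
  qed
  fix d
  show "{x \<in> (koszul_space (betti0_supp F) (Suc d) b :: ('j set \<Rightarrow> 'k) set). koszul_diff (betti0_supp F) r d b x = (\<lambda>_. 0)}
       = koszul_diff (betti0_supp F) r (Suc d) b ` koszul_space (betti0_supp F) (Suc (Suc d)) b"
    unfolding A_def[symmetric]
  proof (intro equalityI subsetI)
    fix x :: "'j set \<Rightarrow> 'k" assume "x \<in> {x \<in> koszul_space A (Suc d) b. koszul_diff A r d b x = (\<lambda>_. 0)}"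
    then have x: "x \<in> koszul_space A (Suc d) b" "koszul_diff A r d b x = (\<lambda>_. 0)" by auto
    show "x \<in> koszul_diff A r (Suc d) b ` koszul_space A (Suc (Suc d)) b"
    proof (cases "\<exists>v\<in>A. v \<le> b")
      case True
      then obtain v where v: "v \<in> A" "v \<le> b" by blast
      have "koszul_diff A r (Suc d) b (Hom r v x) = x"
      proof (rule boundary_of_cycle[OF slo x(1) v])
        fix U :: "'j set" assume "U \<subseteq> A" "card U = Suc d"
        then have "koszul_diff A r d b x U = Dsum A r U x" by (intro diff_eq[OF x(1)])
        then show "Dsum A r U x = 0" using fun_cong[OF x(2), of U] by simp
      qed
      moreover have "Hom r v x \<in> koszul_space A (Suc (Suc d)) b" using Hom_space[OF x(1) v] by simp
      ultimately show ?thesis by (intro image_eqI[where x="Hom r v x"]) simp_all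
    next
      case False
      then have "x = (\<lambda>_. 0)" using empty_space[OF False x(1)] by simp
      then show ?thesis by (intro image_eqI[where x="\<lambda>_. 0"]) (simp_all add: diff_zero zero_space)
    qed
  next
    fix x :: "'j set \<Rightarrow> 'k" assume "x \<in> koszul_diff A r (Suc d) b ` koszul_space A (Suc (Suc d)) b"
    then obtain y where y: "y \<in> koszul_space A (Suc (Suc d)) b" "x = koszul_diff A r (Suc d) b y" by auto
    have "koszul_diff A r d b x = (\<lambda>_. 0)"
    proof
      fix U
      show "koszul_diff A r d b x U = 0"
      proof (cases "U \<in> koszul_idx A d b")
        case True
        then have U: "U \<subseteq> A" "card U = Suc d" unfolding idx_iff by blast+
        have "koszul_diff A r d b x U = Dsum A r U x" using True by (simp add: koszul_diff_def Dsum_def)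
        also have "\<dots> = 0" unfolding y(2) by (rule cycle_of_boundary[OF slo y(1) U])
        finally show ?thesis .
      qed (simp add: koszul_diff_def)
    qed
    moreover have "x \<in> koszul_space A (Suc d) b" using y(2) diff_space by simp
    ultimately show "x \<in> {x \<in> koszul_space A (Suc d) b. koszul_diff A r d b x = (\<lambda>_. 0)}" by simp
  qed
qed

end
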